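(* Let $H=\{\cdot\mid 1\}$ and let $\mathcal{U}=\mathcal{D}(H)$. Then $H\equiv_\mathcal{U}0$.
   Context: Games are finite partizan games; $1=\{0\mid\cdot\}$, and $\{\cdot\mid 1\}$ is the game with no Left option and sole Right option $1$. $o(G)$ is the misère outcome class (ordered $\mathscr{L}>\mathscr{N}>\mathscr{R}$, $\mathscr{L}>\mathscr{P}>\mathscr{R}$). A universe is a set of games closed under options, disjunctive sums, conjugates, and forming $\{\mathscr{G}^L\mid\mathscr{G}^R\}$ from nonempty finite subsets of it; $\mathcal{D}(\mathcal{A})$ is the smallest universe containing $\mathcal{A}$. $G\equiv_\mathcal{U}H$ means $o(G+X)=o(H+X)$ for all $X\in\mathcal{U}$. *)

theory Defs
  imports Main "HOL-Library.FSet"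
begin

datatype game = Game (lopts: "game fset") (ropts: "game fset")

definition zero :: game where "zero = Game {||} {||}"
definition one :: game where "one = Game {|zero|} {||}"

primrec conj :: "game \<Rightarrow> game" where
  "conj (Game L R) = Game (fimage conj R) (fimage conj L)"

lemma size_lopt: "x |\<in>| L \<Longrightarrow> size x < size (Game L R)"
  by (induction L) (auto simp: size_fset_simps)

lemma size_ropt: "x |\<in>| R \<Longrightarrow> size x < size (Game L R)"
  by (induction R) (auto simp: size_fset_simps)

function gsum :: "game \<Rightarrow> game \<Rightarrow> game" where
  "gsum (Game GL GR) (Game HL HR) =
     Game ((\<lambda>x. gsum x (Game HL HR)) |`| GL |\<union>| (\<lambda>y. gsum (Game GL GR) y) |`| HL)
          ((\<lambda>x. gsum x (Game HL HR)) |`| GR |\<union>| (\<lambda>y. gsum (Game GL GR) y) |`| HR)"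
  by pat_completeness auto
termination
  by (relation "measure (\<lambda>(g, h). size g + size h)")
     (auto dest: size_lopt size_ropt)

text \<open>Misere play: a player with no move available wins.
  \<open>first_wins G = (l, r)\<close>: l says Left wins G moving first, r says Right wins G moving first.\<close>
primrec first_wins :: "game \<Rightarrow> bool \<times> bool" where
  "first_wins (Game L R) =
     (L = {||} \<or> (\<exists>p \<in> fset (fimage first_wins L). \<not> snd p),
      R = {||} \<or> (\<exists>p \<in> fset (fimage first_wins R). \<not> fst p))"

datatype outcome = OutL | OutN | OutP | OutR

definition misere_outcome :: "game \<Rightarrow> outcome" where
  "misere_outcome G =
     (case first_wins G of
        (True, False) \<Rightarrow> OutL
      | (True, True) \<Rightarrow> OutN
      | (False, False) \<Rightarrow> OutP
      | (False, True) \<Rightarrow> OutR)"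

definition universe :: "game set \<Rightarrow> bool" where
  "universe U \<longleftrightarrow>
     (\<forall>G \<in> U. fset (lopts G) \<subseteq> U \<and> fset (ropts G) \<subseteq> U) \<and>
     (\<forall>G \<in> U. \<forall>H \<in> U. gsum G H \<in> U) \<and>
     (\<forall>G \<in> U. conj G \<in> U) \<and>
     (\<forall>A B. A \<noteq> {||} \<longrightarrow> B \<noteq> {||} \<longrightarrow> fset A \<subseteq> U \<longrightarrow> fset B \<subseteq> U \<longrightarrow> Game A B \<in> U)"

definition univ_closure :: "game set \<Rightarrow> game set" where
  "univ_closure A = \<Inter> {U. universe U \<and> A \<subseteq> U}"

definition equiv_mod :: "game set \<Rightarrow> game \<Rightarrow> game \<Rightarrow> bool" where
  "equiv_mod U G H \<longleftrightarrow> (\<forall>X \<in> U. misere_outcome (gsum G X) = misere_outcome (gsum H X))"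

end

theory Submission
  imports Defs
begin

lemma lopts_gsum: "lopts (gsum G K) = (\<lambda>x. gsum x K) |`| lopts G |\<union>| (\<lambda>y. gsum G y) |`| lopts K"
  by (cases G; cases K) simp

lemma ropts_gsum: "ropts (gsum G K) = (\<lambda>x. gsum x K) |`| ropts G |\<union>| (\<lambda>y. gsum G y) |`| ropts K"
  by (cases G; cases K) simp

lemma lopts_conj: "lopts (conj G) = conj |`| ropts G"
  by (cases G) simp

lemma ropts_conj: "ropts (conj G) = conj |`| lopts G"
  by (cases G) simp

lemma fw_eq: "first_wins G =
   (lopts G = {||} \<or> (\<exists>x. x |\<in>| lopts G \<and> \<not> snd (first_wins x)),
    ropts G = {||} \<or> (\<exists>x. x |\<in>| ropts G \<and> \<not> fst (first_wins x)))"
  by (cases G) auto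

lemma size_lo: "x |\<in>| lopts G \<Longrightarrow> size x < size G"
  by (cases G) (auto dest: size_lopt)

lemma size_ro: "x |\<in>| ropts G \<Longrightarrow> size x < size G"
  by (cases G) (auto dest: size_ropt)

lemma game_eqI: "lopts G = lopts K \<Longrightarrow> ropts G = ropts K \<Longrightarrow> G = K"
  by (cases G; cases K) simp

lemma gsum_zero: "gsum zero X = X"
proof (induction X)
  case (Game L R)
  show ?case using Game unfolding zero_def
    by (auto intro!: fset.map_ident_strong)
qed

inductive good :: "game \<Rightarrow> bool" where
  "ropts X = {||} \<Longrightarrow> (\<And>Y. Y |\<in>| lopts X \<Longrightarrow> ropts Y = {||} \<or> (\<exists>Z. Z |\<in>| ropts Y \<and> good Z))
   \<Longrightarrow> good X"

inductive good' :: "game \<Rightarrow> bool" where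
  "lopts X = {||} \<Longrightarrow> (\<And>Y. Y |\<in>| ropts X \<Longrightarrow> lopts Y = {||} \<or> (\<exists>Z. Z |\<in>| lopts Y \<and> good' Z))
   \<Longrightarrow> good' X"

inductive ginv :: "game \<Rightarrow> bool" where
  "(ropts X = {||} \<Longrightarrow> good X) \<Longrightarrow> (lopts X = {||} \<Longrightarrow> good' X)
   \<Longrightarrow> (\<And>Y. Y |\<in>| lopts X \<Longrightarrow> ginv Y) \<Longrightarrow> (\<And>Y. Y |\<in>| ropts X \<Longrightarrow> ginv Y) \<Longrightarrow> ginv X"

lemma good_sum: "good X \<Longrightarrow> good Y \<Longrightarrow> good (gsum X Y)"
proof (induction "size X + size Y" arbitrary: X Y rule: less_induct)
  case less
  have rX: "ropts X = {||}" and hX: "\<And>A. A |\<in>| lopts X \<Longrightarrow> ropts A = {||} \<or> (\<exists>Z. Z |\<in>| ropts A \<and> good Z)"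
    using less.prems(1) by (auto elim: good.cases)
  have rY: "ropts Y = {||}" and hY: "\<And>A. A |\<in>| lopts Y \<Longrightarrow> ropts A = {||} \<or> (\<exists>Z. Z |\<in>| ropts A \<and> good Z)"
    using less.prems(2) by (auto elim: good.cases)
  show ?case
  proof (rule good.intros)
    show "ropts (gsum X Y) = {||}" using rX rY by (simp add: ropts_gsum)
  next
    fix A assume "A |\<in>| lopts (gsum X Y)"
    then consider (a) B where "B |\<in>| lopts X" "A = gsum B Y" | (b) B where "B |\<in>| lopts Y" "A = gsum X B"
      by (auto simp: lopts_gsum)
    then show "ropts A = {||} \<or> (\<exists>Z. Z |\<in>| ropts A \<and> good Z)"
    proof cases
      case a
      show ?thesis
      proof (cases "ropts B = {||}")
        case True then show ?thesis using a rY by (simp add: ropts_gsum)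
      next
        case False
        then obtain Z where Z: "Z |\<in>| ropts B" "good Z" using hX a by blast
        have "size Z < size X" using Z(1) a(1)
          by (meson size_lo size_ro less_trans)
        then have "good (gsum Z Y)" using less Z by auto
        moreover have "gsum Z Y |\<in>| ropts A" using a Z by (simp add: ropts_gsum)
        ultimately show ?thesis by blast
      qed
    next
      case b
      show ?thesis
      proof (cases "ropts B = {||}")
        case True then show ?thesis using b rX by (simp add: ropts_gsum)
      next
        case False
        then obtain Z where Z: "Z |\<in>| ropts B" "good Z" using hY b by blast
        have "size Z < size Y" using Z(1) b(1)
          by (meson size_lo size_ro less_trans)
        then have "good (gsum X Z)" using less Z by auto
        moreover have "gsum X Z |\<in>| ropts A" using b Z by (simp add: ropts_gsum)
        ultimately show ?thesis by blast
      qed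
    qed
  qed
qed

lemma good'_sum: "good' X \<Longrightarrow> good' Y \<Longrightarrow> good' (gsum X Y)"
proof (induction "size X + size Y" arbitrary: X Y rule: less_induct)
  case less
  have rX: "lopts X = {||}" and hX: "\<And>A. A |\<in>| ropts X \<Longrightarrow> lopts A = {||} \<or> (\<exists>Z. Z |\<in>| lopts A \<and> good' Z)"
    using less.prems(1) by (auto elim: good'.cases)
  have rY: "lopts Y = {||}" and hY: "\<And>A. A |\<in>| ropts Y \<Longrightarrow> lopts A = {||} \<or> (\<exists>Z. Z |\<in>| lopts A \<and> good' Z)"
    using less.prems(2) by (auto elim: good'.cases)
  show ?case
  proof (rule good'.intros)
    show "lopts (gsum X Y) = {||}" using rX rY by (simp add: lopts_gsum)
  next
    fix A assume "A |\<in>| ropts (gsum X Y)"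
    then consider (a) B where "B |\<in>| ropts X" "A = gsum B Y" | (b) B where "B |\<in>| ropts Y" "A = gsum X B"
      by (auto simp: ropts_gsum)
    then show "lopts A = {||} \<or> (\<exists>Z. Z |\<in>| lopts A \<and> good' Z)"
    proof cases
      case a
      show ?thesis
      proof (cases "lopts B = {||}")
        case True then show ?thesis using a rY by (simp add: lopts_gsum)
      next
        case False
        then obtain Z where Z: "Z |\<in>| lopts B" "good' Z" using hX a by blast
        have "size Z < size X" using Z(1) a(1)
          by (meson size_lo size_ro less_trans)
        then have "good' (gsum Z Y)" using less Z by auto
        moreover have "gsum Z Y |\<in>| lopts A" using a Z by (simp add: lopts_gsum)
        ultimately show ?thesis by blast
      qed
    next
      case b
      show ?thesis
      proof (cases "lopts B = {||}")
        case True then show ?thesis using b rX by (simp add: lopts_gsum)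
      next
        case False
        then obtain Z where Z: "Z |\<in>| lopts B" "good' Z" using hY b by blast
        have "size Z < size Y" using Z(1) b(1)
          by (meson size_lo size_ro less_trans)
        then have "good' (gsum X Z)" using less Z by auto
        moreover have "gsum X Z |\<in>| lopts A" using b Z by (simp add: lopts_gsum)
        ultimately show ?thesis by blast
      qed
    qed
  qed
qed

lemma good_conj: "good X \<Longrightarrow> good' (conj X)"
proof (induction rule: good.induct)
  case (1 X)
  show ?case
  proof (rule good'.intros)
    show "lopts (conj X) = {||}" using 1 by (simp add: lopts_conj)
  next
    fix Y assume "Y |\<in>| ropts (conj X)"
    then obtain B where B: "B |\<in>| lopts X" "Y = conj B" by (auto simp: ropts_conj)
    then show "lopts Y = {||} \<or> (\<exists>Z. Z |\<in>| lopts Y \<and> good' Z)"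
      using 1(2)[OF B(1)] by (auto simp: lopts_conj)
  qed
qed

lemma good'_conj: "good' X \<Longrightarrow> good (conj X)"
proof (induction rule: good'.induct)
  case (1 X)
  show ?case
  proof (rule good.intros)
    show "ropts (conj X) = {||}" using 1 by (simp add: ropts_conj)
  next
    fix Y assume "Y |\<in>| lopts (conj X)"
    then obtain B where B: "B |\<in>| ropts X" "Y = conj B" by (auto simp: lopts_conj)
    then show "ropts Y = {||} \<or> (\<exists>Z. Z |\<in>| ropts Y \<and> good Z)"
      using 1(2)[OF B(1)] by (auto simp: ropts_conj)
  qed
qed

lemma ginv_sum: "ginv X \<Longrightarrow> ginv Y \<Longrightarrow> ginv (gsum X Y)"
proof (induction "size X + size Y" arbitrary: X Y rule: less_induct)
  case less
  have X: "ropts X = {||} \<Longrightarrow> good X" "lopts X = {||} \<Longrightarrow> good' X"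
    "\<And>A. A |\<in>| lopts X \<Longrightarrow> ginv A" "\<And>A. A |\<in>| ropts X \<Longrightarrow> ginv A"
    using less.prems(1) by (auto elim: ginv.cases)
  have Y: "ropts Y = {||} \<Longrightarrow> good Y" "lopts Y = {||} \<Longrightarrow> good' Y"
    "\<And>A. A |\<in>| lopts Y \<Longrightarrow> ginv A" "\<And>A. A |\<in>| ropts Y \<Longrightarrow> ginv A"
    using less.prems(2) by (auto elim: ginv.cases)
  show ?case
  proof (rule ginv.intros)
    show "ropts (gsum X Y) = {||} \<Longrightarrow> good (gsum X Y)"
      using X Y good_sum by (simp add: ropts_gsum)
    show "lopts (gsum X Y) = {||} \<Longrightarrow> good' (gsum X Y)"
      using X Y good'_sum by (simp add: lopts_gsum)
  next
    fix A assume "A |\<in>| lopts (gsum X Y)"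
    then consider (a) B where "B |\<in>| lopts X" "A = gsum B Y" | (b) B where "B |\<in>| lopts Y" "A = gsum X B"
      by (auto simp: lopts_gsum)
    then show "ginv A"
    proof cases
      case a
      then have "size B < size X" by (simp add: size_lo)
      then show ?thesis using less a X by auto
    next
      case b
      then have "size B < size Y" by (simp add: size_lo)
      then show ?thesis using less b Y by auto
    qed
  next
    fix A assume "A |\<in>| ropts (gsum X Y)"
    then consider (a) B where "B |\<in>| ropts X" "A = gsum B Y" | (b) B where "B |\<in>| ropts Y" "A = gsum X B"
      by (auto simp: ropts_gsum)
    then show "ginv A"
    proof cases
      case a
      then have "size B < size X" by (simp add: size_ro)
      then show ?thesis using less a X by auto
    next
      case b
      then have "size B < size Y" by (simp add: size_ro)
      then show ?thesis using less b Y by auto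
    qed
  qed
qed

lemma ginv_conj: "ginv X \<Longrightarrow> ginv (conj X)"
proof (induction rule: ginv.induct)
  case (1 X)
  show ?case
  proof (rule ginv.intros)
    show "ropts (conj X) = {||} \<Longrightarrow> good (conj X)"
      using 1 good'_conj by (simp add: ropts_conj)
    show "lopts (conj X) = {||} \<Longrightarrow> good' (conj X)"
      using 1 good_conj by (simp add: lopts_conj)
  qed (use 1 in \<open>auto simp: lopts_conj ropts_conj\<close>)
qed

definition HH :: game where "HH = Game {||} {|one|}"

lemma good_zero: "good zero" by (rule good.intros) (auto simp: zero_def)
lemma good'_zero: "good' zero" by (rule good'.intros) (auto simp: zero_def)
lemma ginv_zero: "ginv zero"
  apply (rule ginv.intros) apply (simp add: good_zero) apply (simp add: good'_zero) apply (auto simp: zero_def) done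
lemma good_one: "good one" by (rule good.intros) (auto simp: one_def zero_def)
lemma ginv_one: "ginv one"
  apply (rule ginv.intros) apply (simp add: good_one) apply (auto simp: one_def ginv_zero) done
lemma good'_HH: "good' HH"
  by (rule good'.intros) (auto simp: HH_def one_def good'_zero)
lemma ginv_HH: "ginv HH"
  apply (rule ginv.intros) apply (auto simp: good'_HH) apply (auto simp: HH_def ginv_one) done

lemma universe_inv: "universe {X. ginv X}"
  unfolding universe_def
proof (intro conjI ballI allI impI)
  fix G assume "G \<in> {X. ginv X}"
  then show "fset (lopts G) \<subseteq> {X. ginv X}" "fset (ropts G) \<subseteq> {X. ginv X}"
    by (auto elim: ginv.cases)
next
  fix G H assume "G \<in> {X. ginv X}" "H \<in> {X. ginv X}"
  then show "gsum G H \<in> {X. ginv X}" using ginv_sum by auto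
next
  fix G assume "G \<in> {X. ginv X}"
  then show "conj G \<in> {X. ginv X}" using ginv_conj by auto
next
  fix A B :: "game fset"
  assume "A \<noteq> {||}" "B \<noteq> {||}" "fset A \<subseteq> {X. ginv X}" "fset B \<subseteq> {X. ginv X}"
  then show "Game A B \<in> {X. ginv X}" by (auto intro!: ginv.intros[of "Game A B"])
qed

lemma closure_inv: "X \<in> univ_closure {HH} \<Longrightarrow> ginv X"
  unfolding univ_closure_def using universe_inv ginv_HH by blast

lemma good_T: "good X \<Longrightarrow> \<not> fst (first_wins (gsum one X))"
proof (induction rule: good.induct)
  case (1 X)
  have lo: "lopts (gsum one X) = {|gsum zero X|} |\<union>| (\<lambda>y. gsum one y) |`| lopts X"
    by (simp add: lopts_gsum one_def)
  have s1: "snd (first_wins X)" using 1(1) by (subst fw_eq) simp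
  have s2: "snd (first_wins (gsum one Y))" if Y: "Y |\<in>| lopts X" for Y
  proof (cases "ropts Y = {||}")
    case True then show ?thesis by (subst fw_eq) (simp add: ropts_gsum one_def)
  next
    case False
    then obtain Z where "Z |\<in>| ropts Y" "\<not> fst (first_wins (gsum one Z))" using 1(2)[OF Y] by blast
    then show ?thesis by (subst fw_eq) (auto simp: ropts_gsum one_def)
  qed
  show ?case
    by (subst fw_eq) (use lo s1 s2 in \<open>auto simp: gsum_zero\<close>)
qed

lemma main_fw: "ginv X \<Longrightarrow> first_wins (gsum HH X) = first_wins X"
proof (induction rule: ginv.induct)
  case (1 X)
  have lo: "lopts (gsum HH X) = (\<lambda>y. gsum HH y) |`| lopts X"
    by (simp add: lopts_gsum HH_def)
  have ro: "ropts (gsum HH X) = {|gsum one X|} |\<union>| (\<lambda>y. gsum HH y) |`| ropts X"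
    by (simp add: ropts_gsum HH_def)
  have IHL: "\<And>Y. Y |\<in>| lopts X \<Longrightarrow> first_wins (gsum HH Y) = first_wins Y" using 1 by blast
  have IHR: "\<And>Y. Y |\<in>| ropts X \<Longrightarrow> first_wins (gsum HH Y) = first_wins Y" using 1 by blast
  have A: "fst (first_wins (gsum HH X)) = fst (first_wins X)"
    by (subst fw_eq, subst (2) fw_eq) (use lo IHL in auto)
  have B0: "snd (first_wins (gsum HH X)) = (\<not> fst (first_wins (gsum one X)) \<or>
      (\<exists>y. y |\<in>| ropts X \<and> \<not> fst (first_wins y)))"
    by (subst fw_eq) (use ro IHR in auto)
  have B1: "snd (first_wins X) = (ropts X = {||} \<or> (\<exists>y. y |\<in>| ropts X \<and> \<not> fst (first_wins y)))"
    by (subst fw_eq) simp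
  have C: "ropts X = {||} \<Longrightarrow> \<not> fst (first_wins (gsum one X))" using 1(1) good_T by blast
  have D: "\<not> fst (first_wins (gsum one X)) \<Longrightarrow> snd (first_wins X)"
  proof -
    assume a: "\<not> fst (first_wins (gsum one X))"
    have "gsum zero X |\<in>| lopts (gsum one X)" by (simp add: lopts_gsum one_def)
    then show ?thesis using a by (subst (asm) fw_eq) (auto simp: gsum_zero)
  qed
  have B: "snd (first_wins (gsum HH X)) = snd (first_wins X)"
    using B0 B1 C D by blast
  show ?case using A B by (simp add: prod_eq_iff)
qed

theorem mainTheorem18:
  shows "equiv_mod (univ_closure {Game {||} {|one|}}) (Game {||} {|one|}) zero"
  unfolding equiv_mod_def
proof
  fix X assume "X \<in> univ_closure {Game {||} {|one|}}"
  then have "ginv X" using closure_inv unfolding HH_def by blast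
  then have "first_wins (gsum HH X) = first_wins X" by (rule main_fw)
  then show "misere_outcome (gsum (Game {||} {|one|}) X) = misere_outcome (gsum zero X)"
    unfolding misere_outcome_def HH_def gsum_zero by simp
qed

end
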